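(* Let $n$ be one of the integers for which $\mathbb{Z}[\xi_n]$ has class number one, $\mathcal{M}_n=\mathbb{Z}[\xi_n]$, and $I$ a principal ideal of $\mathcal{M}_n$ of finite index. Let $S$ be a $\varphi(n)\times\varphi(n)$ integer matrix whose columns form a generating set of the sublattice $L$ representing $I$, and let $B$ be the matrix representing $\phi_2$, both with respect to the basis $\{1,\xi_n,\dots,\xi_n^{\varphi(n)-1}\}$. For the Bravais coloring of $\mathcal{M}_n$ determined by $I$, the color symmetry group satisfies $H=T(G)\rtimes D_N$ if and only if $S^{-1}BS$ is an integral matrix.
   Context: Standing assumption: $n\in\{3,4,5,7,8,9,11,12,13,15,16,17,19,20,21,24,25,27,28,32,33,35,36,40,44,45,48,60,84\}$ (the values for which $\mathcal{M}_n=\mathbb{Z}[\xi_n]$, $\xi_n=\exp(2\pi i/n)$, is a principal ideal domain). Let $\varphi$ be Euler's function and $N=n$ if $n$ is even, $N=2n$ if $n$ is odd. Using the $\mathbb{Z}$-basis $\{1,\xi_n,\dots,\xi_n^{\varphi(n)-1}\}$ of $\mathcal{M}_n$, each element is identified with its integer coordinate vector, so $\mathcal{M}_n$ becomes a lattice $\Lambda=\mathbb{Z}^{\varphi(n)}\subset\mathbb{R}^{\varphi(n)}$, and a principal ideal $I$ of index $\ell$ becomes a sublattice $L\subseteq\Lambda$ of index $\ell$. Let $\phi_1$ be the linear map of $\mathbb{R}^{\varphi(n)}$ induced by multiplication by $\exp(2\pi i/N)$ (an $N$-fold rotation) and $\phi_2$ the linear map induced by complex conjugation (a reflection); they generate a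 group $D_N$, dihedral of order $2N$. Let $T(G)=\{t_y: x\mapsto x+y \mid y\in\Lambda\}$. The symmetry group of $\Lambda$ is $G=T(G)\rtimes D_N$. The Bravais coloring determined by $I$ assigns to each element of $\Lambda$ one of $\ell$ colors, two elements getting the same color iff they lie in the same coset of $L$ in $\Lambda$. The color symmetry group $H$ is the set of $g\in G$ that permute the colors, i.e. for every coset $x+L$ the image $g(x+L)$ is again a coset of $L$. *)

theory Defs
  imports Complex_Main "HOL-Number_Theory.Totient" "Jordan_Normal_Form.Gauss_Jordan_Elimination"
begin

definition pid_cyclotomic_indices :: "nat set" where
  "pid_cyclotomic_indices = {3,4,5,7,8,9,11,12,13,15,16,17,19,20,21,24,25,27,28,32,33,35,36,40,44,45,48,60,84}"

definition xi :: "nat \<Rightarrow> complex" where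
  "xi n = cis (2 * pi / real n)"

definition NN :: "nat \<Rightarrow> nat" where
  "NN n = (if even n then n else 2 * n)"

definition zetaN :: "nat \<Rightarrow> complex" where
  "zetaN n = cis (2 * pi / real (NN n))"

definition Lam :: "nat \<Rightarrow> int vec set" where
  "Lam n = carrier_vec (totient n)"

definition emb :: "nat \<Rightarrow> int vec \<Rightarrow> complex" where
  "emb n v = (\<Sum>k<totient n. of_int (v $ k) * xi n ^ k)"

definition Mring :: "nat \<Rightarrow> complex set" where
  "Mring n = emb n ` Lam n"

definition coords :: "nat \<Rightarrow> complex \<Rightarrow> int vec" where
  "coords n z = (THE v. v \<in> Lam n \<and> emb n v = z)"

definition phi1_mat :: "nat \<Rightarrow> int mat" where
  "phi1_mat n = mat (totient n) (totient n) (\<lambda>(i,k). coords n (zetaN n * xi n ^ k) $ i)"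

definition phi2_mat :: "nat \<Rightarrow> int mat" where
  "phi2_mat n = mat (totient n) (totient n) (\<lambda>(i,k). coords n (cnj (xi n ^ k)) $ i)"

text \<open>The group D_N generated by phi_1 and phi_2 (finite order, so the generated monoid is the group).\<close>
inductive_set DN :: "nat \<Rightarrow> int mat set" for n where
  one: "1\<^sub>m (totient n) \<in> DN n"
| rot: "A \<in> DN n \<Longrightarrow> phi1_mat n * A \<in> DN n"
| refl: "A \<in> DN n \<Longrightarrow> phi2_mat n * A \<in> DN n"

definition symG :: "nat \<Rightarrow> (int vec \<Rightarrow> int vec) set" where
  "symG n = {(\<lambda>x. A *\<^sub>v x + y) | A y. A \<in> DN n \<and> y \<in> Lam n}"

definition coset :: "int vec set \<Rightarrow> int vec \<Rightarrow> int vec set" where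
  "coset L x = {x + l | l. l \<in> L}"

definition colorH :: "nat \<Rightarrow> int vec set \<Rightarrow> (int vec \<Rightarrow> int vec) set" where
  "colorH n L = {g \<in> symG n. \<forall>x \<in> Lam n. \<exists>x' \<in> Lam n. g ` coset L x = coset L x'}"

end

theory Submission
  imports Defs "Berlekamp_Zassenhaus.Square_Free_Int_To_Square_Free_GFp" "Berlekamp_Zassenhaus.Berlekamp_Type_Based" "Jordan_Normal_Form.Determinant"
begin


lemma poly_of_rat_of_int: "poly (map_poly (of_rat :: rat \<Rightarrow> complex) (of_int_poly f)) z = poly (of_int_poly f) z"
  by (simp add: map_poly_map_poly o_def)

lemma common_root_dvd:
  fixes f h :: "int poly" and z :: complex
  assumes f: "prime_elem f" and fz: "poly (of_int_poly f) z = 0" and hz: "poly (of_int_poly h) z = 0"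
  shows "f dvd h"
proof (rule ccontr)
  assume nd: "\<not> f dvd h"
  define g where "g = gcd f h"
  have gf: "g dvd f" unfolding g_def by simp
  then obtain k where fk: "f = g * k" by (elim dvdE)
  have irr: "irreducible f" using f by (rule prime_elem_imp_irreducible)
  from irreducibleD[OF irr fk] have "is_unit g \<or> is_unit k" .
  moreover have "\<not> is_unit k"
  proof
    assume "is_unit k"
    then have "f dvd g" using fk by (metis dvd_mult_unit_iff dvd_refl)
    then have "f dvd h" unfolding g_def by (metis dvd_trans gcd_dvd2)
    with nd show False by simp
  qed
  ultimately have gu: "is_unit g" by simp
  then obtain u where gu': "g = [:u:]" "is_unit u"
    by (metis is_unit_poly_iff)
  have u: "u = 1 \<or> u = -1" using gu'(2) by (auto simp: zdvd1_eq abs_if split: if_splits)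
  have "gcd (of_int_poly f :: rat poly) (of_int_poly h) = 1"
    unfolding gcd_rat_to_gcd_int g_def[symmetric] using u gu'(1) by (elim disjE) simp_all
  then obtain a b where ab: "a * of_int_poly f + b * of_int_poly h = (1 :: rat poly)"
    by (metis bezout_coefficients_fst_snd)
  interpret R: map_poly_comm_ring_hom "of_rat :: rat \<Rightarrow> complex" by unfold_locales
  have "map_poly (of_rat :: rat \<Rightarrow> complex) (a * of_int_poly f + b * of_int_poly h) = 1"
    unfolding ab by simp
  then have "poly (map_poly (of_rat :: rat \<Rightarrow> complex) (a * of_int_poly f + b * of_int_poly h)) z = 1"
    by simp
  then show False
    by (simp add: R.hom_add R.hom_mult poly_of_rat_of_int fz hz)
qed

hide_const (open) up_ring.monom up_ring.coeff

lemma frob_type: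
  fixes f g :: "int poly" and ty :: "'a::prime_card itself"
  assumes fg: "f * g = monom 1 n - 1" and n: "n > 0" and pn: "\<not> CARD('a) dvd n"
    and lc: "is_unit (lead_coeff f)" and deg: "degree f > 0"
    and dv: "f dvd (\<Sum>i\<le>degree g. monom (coeff g i) (CARD('a) * i))"
  shows False
proof -
  let ?p = "CARD('a)"
  define F :: "'a mod_ring poly" where "F = of_int_poly f"
  define G :: "'a mod_ring poly" where "G = of_int_poly g"
  have FG: "F * G = monom 1 n - 1"
    unfolding F_def G_def of_int_poly_hom.hom_mult[symmetric] fg
    by (simp add: of_int_poly_hom.hom_minus map_poly_monom)
  have "lead_coeff f = 1 \<or> lead_coeff f = -1" using lc by (auto simp: zdvd1_eq abs_if split: if_splits)
  then have "(of_int (lead_coeff f) :: 'a mod_ring) \<noteq> 0" by auto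
  then have degF: "degree F = degree f" unfolding F_def by (rule map_poly_degree_eq)
  have F0: "F \<noteq> 0" using degF deg by auto
  have Fnu: "\<not> is_unit F" using degF deg by (simp add: is_unit_iff_degree F0)
  have "of_int_poly (\<Sum>i\<le>degree g. monom (coeff g i) (?p * i)) = (\<Sum>i\<le>degree g. monom (coeff G i) (?p * i) :: 'a mod_ring poly)"
    unfolding G_def by (simp add: of_int_poly_hom.hom_sum map_poly_monom)
  also have "\<dots> = (\<Sum>i\<le>degree G. monom (coeff G i) (?p * i))"
  proof (rule sum.mono_neutral_right)
    show "{..degree G} \<subseteq> {..degree g}" unfolding G_def using degree_map_poly_le by auto
  qed (auto simp: coeff_eq_0)
  also have "\<dots> = G ^ ?p" by (rule poly_power_card_as_sum_of_monoms[symmetric])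
  finally have eqG: "of_int_poly (\<Sum>i\<le>degree g. monom (coeff g i) (?p * i)) = G ^ ?p" .
  have "F dvd of_int_poly (\<Sum>i\<le>degree g. monom (coeff g i) (?p * i))"
    unfolding F_def by (rule of_int_poly_hom.hom_dvd[OF dv])
  then have "F dvd G ^ ?p" unfolding eqG .
  obtain q where q: "q dvd F" "prime q" using prime_divisor_exists[OF F0 Fnu] by auto
  have "q dvd G ^ ?p" using q(1) \<open>F dvd G ^ ?p\<close> by (rule dvd_trans)
  then have qG: "q dvd G" using q(2) by (meson prime_dvd_power prime_elem_dvd_power prime_imp_prime_elem)
  have "q * q dvd monom 1 n - 1" unfolding FG[symmetric] using q(1) qG by (rule mult_dvd_mono)
  then obtain k where k: "monom 1 n - 1 = q * q * k" by (elim dvdE)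
  have "pderiv (monom 1 n - 1 :: 'a mod_ring poly) = q * (q * pderiv k + 2 * k * pderiv q)"
    unfolding k by (simp add: pderiv_mult algebra_simps)
  then have d1: "q dvd pderiv (monom 1 n - 1 :: 'a mod_ring poly)" by simp
  have "pderiv (monom 1 n - 1 :: 'a mod_ring poly) = monom (of_nat n) (n - 1)"
    by (simp add: pderiv_monom pderiv_diff)
  have nz: "(of_nat n :: 'a mod_ring) \<noteq> 0" using pn of_nat_0_mod_ring_dvd by blast
  have d2: "q dvd monom 1 n - 1" using k by simp
  have "monom 1 n - 1 - monom (inverse (of_nat n)) 1 * pderiv (monom 1 n - 1 :: 'a mod_ring poly) = -1"
    using nz n by (simp add: pderiv_monom pderiv_diff mult_monom)
  moreover have "q dvd monom 1 n - 1 - monom (inverse (of_nat n)) 1 * pderiv (monom 1 n - 1 :: 'a mod_ring poly)"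
    using d1 d2 by (simp add: dvd_diff)
  ultimately have "q dvd 1" by simp
  with q(2) show False using not_prime_unit by blast
qed

lemma frob_type2:
  fixes f g :: "int poly" and p :: nat
  assumes "p = CARD('a::prime_card)"
   and "f * g = monom 1 n - 1" and "n > 0" and "\<not> p dvd n"
    and "is_unit (lead_coeff f)" and "degree f > 0"
    and "f dvd (\<Sum>i\<le>degree g. monom (coeff g i) (p * i))"
  shows False
  using frob_type[where 'a='a] assms by blast

typedef p2 = "{0..<2::nat}" by (intro exI[of _ 0]) simp
lemma card_p2: "CARD(p2) = 2" using type_definition.card[OF type_definition_p2] by simp
lemma prime_2: "prime (2::nat)" unfolding prime_nat_iff' atLeastLessThan_upt by (simp add: upt_rec)
instance p2 :: prime_card by standard (unfold card_p2, rule prime_2)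
lemmas frob_2 = frob_type2[where 'a=p2, unfolded card_p2]
typedef p3 = "{0..<3::nat}" by (intro exI[of _ 0]) simp
lemma card_p3: "CARD(p3) = 3" using type_definition.card[OF type_definition_p3] by simp
lemma prime_3: "prime (3::nat)" unfolding prime_nat_iff' atLeastLessThan_upt by (simp add: upt_rec)
instance p3 :: prime_card by standard (unfold card_p3, rule prime_3)
lemmas frob_3 = frob_type2[where 'a=p3, unfolded card_p3]
typedef p5 = "{0..<5::nat}" by (intro exI[of _ 0]) simp
lemma card_p5: "CARD(p5) = 5" using type_definition.card[OF type_definition_p5] by simp
lemma prime_5: "prime (5::nat)" unfolding prime_nat_iff' atLeastLessThan_upt by (simp add: upt_rec)
instance p5 :: prime_card by standard (unfold card_p5, rule prime_5)
lemmas frob_5 = frob_type2[where 'a=p5, unfolded card_p5]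
typedef p7 = "{0..<7::nat}" by (intro exI[of _ 0]) simp
lemma card_p7: "CARD(p7) = 7" using type_definition.card[OF type_definition_p7] by simp
lemma prime_7: "prime (7::nat)" unfolding prime_nat_iff' atLeastLessThan_upt by (simp add: upt_rec)
instance p7 :: prime_card by standard (unfold card_p7, rule prime_7)
lemmas frob_7 = frob_type2[where 'a=p7, unfolded card_p7]
typedef p11 = "{0..<11::nat}" by (intro exI[of _ 0]) simp
lemma card_p11: "CARD(p11) = 11" using type_definition.card[OF type_definition_p11] by simp
lemma prime_11: "prime (11::nat)" unfolding prime_nat_iff' atLeastLessThan_upt by (simp add: upt_rec)
instance p11 :: prime_card by standard (unfold card_p11, rule prime_11)
lemmas frob_11 = frob_type2[where 'a=p11, unfolded card_p11]
typedef p13 = "{0..<13::nat}" by (intro exI[of _ 0]) simp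
lemma card_p13: "CARD(p13) = 13" using type_definition.card[OF type_definition_p13] by simp
lemma prime_13: "prime (13::nat)" unfolding prime_nat_iff' atLeastLessThan_upt by (simp add: upt_rec)
instance p13 :: prime_card by standard (unfold card_p13, rule prime_13)
lemmas frob_13 = frob_type2[where 'a=p13, unfolded card_p13]
typedef p17 = "{0..<17::nat}" by (intro exI[of _ 0]) simp
lemma card_p17: "CARD(p17) = 17" using type_definition.card[OF type_definition_p17] by simp
lemma prime_17: "prime (17::nat)" unfolding prime_nat_iff' atLeastLessThan_upt by (simp add: upt_rec)
instance p17 :: prime_card by standard (unfold card_p17, rule prime_17)
lemmas frob_17 = frob_type2[where 'a=p17, unfolded card_p17]
typedef p19 = "{0..<19::nat}" by (intro exI[of _ 0]) simp
lemma card_p19: "CARD(p19) = 19" using type_definition.card[OF type_definition_p19] by simp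
lemma prime_19: "prime (19::nat)" unfolding prime_nat_iff' atLeastLessThan_upt by (simp add: upt_rec)
instance p19 :: prime_card by standard (unfold card_p19, rule prime_19)
lemmas frob_19 = frob_type2[where 'a=p19, unfolded card_p19]
typedef p23 = "{0..<23::nat}" by (intro exI[of _ 0]) simp
lemma card_p23: "CARD(p23) = 23" using type_definition.card[OF type_definition_p23] by simp
lemma prime_23: "prime (23::nat)" unfolding prime_nat_iff' atLeastLessThan_upt by (simp add: upt_rec)
instance p23 :: prime_card by standard (unfold card_p23, rule prime_23)
lemmas frob_23 = frob_type2[where 'a=p23, unfolded card_p23]
typedef p29 = "{0..<29::nat}" by (intro exI[of _ 0]) simp
lemma card_p29: "CARD(p29) = 29" using type_definition.card[OF type_definition_p29] by simp
lemma prime_29: "prime (29::nat)" unfolding prime_nat_iff' atLeastLessThan_upt by (simp add: upt_rec)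
instance p29 :: prime_card by standard (unfold card_p29, rule prime_29)
lemmas frob_29 = frob_type2[where 'a=p29, unfolded card_p29]
typedef p31 = "{0..<31::nat}" by (intro exI[of _ 0]) simp
lemma card_p31: "CARD(p31) = 31" using type_definition.card[OF type_definition_p31] by simp
lemma prime_31: "prime (31::nat)" unfolding prime_nat_iff' atLeastLessThan_upt by (simp add: upt_rec)
instance p31 :: prime_card by standard (unfold card_p31, rule prime_31)
lemmas frob_31 = frob_type2[where 'a=p31, unfolded card_p31]
typedef p37 = "{0..<37::nat}" by (intro exI[of _ 0]) simp
lemma card_p37: "CARD(p37) = 37" using type_definition.card[OF type_definition_p37] by simp
lemma prime_37: "prime (37::nat)" unfolding prime_nat_iff' atLeastLessThan_upt by (simp add: upt_rec)
instance p37 :: prime_card by standard (unfold card_p37, rule prime_37)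
lemmas frob_37 = frob_type2[where 'a=p37, unfolded card_p37]
typedef p41 = "{0..<41::nat}" by (intro exI[of _ 0]) simp
lemma card_p41: "CARD(p41) = 41" using type_definition.card[OF type_definition_p41] by simp
lemma prime_41: "prime (41::nat)" unfolding prime_nat_iff' atLeastLessThan_upt by (simp add: upt_rec)
instance p41 :: prime_card by standard (unfold card_p41, rule prime_41)
lemmas frob_41 = frob_type2[where 'a=p41, unfolded card_p41]
typedef p43 = "{0..<43::nat}" by (intro exI[of _ 0]) simp
lemma card_p43: "CARD(p43) = 43" using type_definition.card[OF type_definition_p43] by simp
lemma prime_43: "prime (43::nat)" unfolding prime_nat_iff' atLeastLessThan_upt by (simp add: upt_rec)
instance p43 :: prime_card by standard (unfold card_p43, rule prime_43)
lemmas frob_43 = frob_type2[where 'a=p43, unfolded card_p43]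
typedef p47 = "{0..<47::nat}" by (intro exI[of _ 0]) simp
lemma card_p47: "CARD(p47) = 47" using type_definition.card[OF type_definition_p47] by simp
lemma prime_47: "prime (47::nat)" unfolding prime_nat_iff' atLeastLessThan_upt by (simp add: upt_rec)
instance p47 :: prime_card by standard (unfold card_p47, rule prime_47)
lemmas frob_47 = frob_type2[where 'a=p47, unfolded card_p47]
typedef p53 = "{0..<53::nat}" by (intro exI[of _ 0]) simp
lemma card_p53: "CARD(p53) = 53" using type_definition.card[OF type_definition_p53] by simp
lemma prime_53: "prime (53::nat)" unfolding prime_nat_iff' atLeastLessThan_upt by (simp add: upt_rec)
instance p53 :: prime_card by standard (unfold card_p53, rule prime_53)
lemmas frob_53 = frob_type2[where 'a=p53, unfolded card_p53]
typedef p59 = "{0..<59::nat}" by (intro exI[of _ 0]) simp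
lemma card_p59: "CARD(p59) = 59" using type_definition.card[OF type_definition_p59] by simp
lemma prime_59: "prime (59::nat)" unfolding prime_nat_iff' atLeastLessThan_upt by (simp add: upt_rec)
instance p59 :: prime_card by standard (unfold card_p59, rule prime_59)
lemmas frob_59 = frob_type2[where 'a=p59, unfolded card_p59]
typedef p61 = "{0..<61::nat}" by (intro exI[of _ 0]) simp
lemma card_p61: "CARD(p61) = 61" using type_definition.card[OF type_definition_p61] by simp
lemma prime_61: "prime (61::nat)" unfolding prime_nat_iff' atLeastLessThan_upt by (simp add: upt_rec)
instance p61 :: prime_card by standard (unfold card_p61, rule prime_61)
lemmas frob_61 = frob_type2[where 'a=p61, unfolded card_p61]
typedef p67 = "{0..<67::nat}" by (intro exI[of _ 0]) simp
lemma card_p67: "CARD(p67) = 67" using type_definition.card[OF type_definition_p67] by simp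
lemma prime_67: "prime (67::nat)" unfolding prime_nat_iff' atLeastLessThan_upt by (simp add: upt_rec)
instance p67 :: prime_card by standard (unfold card_p67, rule prime_67)
lemmas frob_67 = frob_type2[where 'a=p67, unfolded card_p67]
typedef p71 = "{0..<71::nat}" by (intro exI[of _ 0]) simp
lemma card_p71: "CARD(p71) = 71" using type_definition.card[OF type_definition_p71] by simp
lemma prime_71: "prime (71::nat)" unfolding prime_nat_iff' atLeastLessThan_upt by (simp add: upt_rec)
instance p71 :: prime_card by standard (unfold card_p71, rule prime_71)
lemmas frob_71 = frob_type2[where 'a=p71, unfolded card_p71]
typedef p73 = "{0..<73::nat}" by (intro exI[of _ 0]) simp
lemma card_p73: "CARD(p73) = 73" using type_definition.card[OF type_definition_p73] by simp
lemma prime_73: "prime (73::nat)" unfolding prime_nat_iff' atLeastLessThan_upt by (simp add: upt_rec)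
instance p73 :: prime_card by standard (unfold card_p73, rule prime_73)
lemmas frob_73 = frob_type2[where 'a=p73, unfolded card_p73]
typedef p79 = "{0..<79::nat}" by (intro exI[of _ 0]) simp
lemma card_p79: "CARD(p79) = 79" using type_definition.card[OF type_definition_p79] by simp
lemma prime_79: "prime (79::nat)" unfolding prime_nat_iff' atLeastLessThan_upt by (simp add: upt_rec)
instance p79 :: prime_card by standard (unfold card_p79, rule prime_79)
lemmas frob_79 = frob_type2[where 'a=p79, unfolded card_p79]
typedef p83 = "{0..<83::nat}" by (intro exI[of _ 0]) simp
lemma card_p83: "CARD(p83) = 83" using type_definition.card[OF type_definition_p83] by simp
lemma prime_83: "prime (83::nat)" unfolding prime_nat_iff' atLeastLessThan_upt by (simp add: upt_rec)
instance p83 :: prime_card by standard (unfold card_p83, rule prime_83)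
lemmas frob_83 = frob_type2[where 'a=p83, unfolded card_p83]
lemma small_primes: assumes pr: "prime (p::nat)" and p84: "p < 84" shows "p \<in> set [2,3,5,7,11,13,17,19,23,29,31,37,41,43,47,53,59,61,67,71,73,79,83]"
proof -
  have "p = 0 \<or> p = 1 \<or> p = 2 \<or> p = 3 \<or> p = 4 \<or> p = 5 \<or> p = 6 \<or> p = 7 \<or> p = 8 \<or> p = 9 \<or> p = 10 \<or> p = 11 \<or> p = 12 \<or> p = 13 \<or> p = 14 \<or> p = 15 \<or> p = 16 \<or> p = 17 \<or> p = 18 \<or> p = 19 \<or> p = 20 \<or> p = 21 \<or> p = 22 \<or> p = 23 \<or> p = 24 \<or> p = 25 \<or> p = 26 \<or> p = 27 \<or> p = 28 \<or> p = 29 \<or> p = 30 \<or> p = 31 \<or> p = 32 \<or> p = 33 \<or> p = 34 \<or> p = 35 \<or> p = 36 \<or> p = 37 \<or> p = 38 \<or> p = 39 \<or> p = 40 \<or> p = 41 \<or> p = 42 \<or> p = 43 \<or> p = 44 \<or> p = 45 \<or> p = 46 \<or> p = 47 \<or> p = 48 \<or> p = 49 \<or> p = 50 \<or> p = 51 \<or> p = 52 \<or> p = 53 \<or> p = 54 \<or> p = 55 \<or> p = 56 \<or> p = 57 \<or> p = 58 \<or> p = 59 \<or> p = 60 \<or> p = 61 \<or> p = 62 \<or> p = 63 \<or> p = 64 \<or> p = 65 \<or> p = 66 \<or> p = 67 \<or> p = 68 \<or> p = 69 \<or> p = 70 \<or> p = 71 \<or> p = 72 \<or> p = 73 \<or>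 p = 74 \<or> p = 75 \<or> p = 76 \<or> p = 77 \<or> p = 78 \<or> p = 79 \<or> p = 80 \<or> p = 81 \<or> p = 82 \<or> p = 83" using p84 by presburger
  moreover have "\<not> prime (0::nat)" "\<not> prime (1::nat)" by simp_all
  moreover have "\<not> prime (4::nat)" "\<not> prime (6::nat)" "\<not> prime (8::nat)" "\<not> prime (9::nat)" "\<not> prime (10::nat)" "\<not> prime (12::nat)" "\<not> prime (14::nat)" "\<not> prime (15::nat)" "\<not> prime (16::nat)" "\<not> prime (18::nat)" "\<not> prime (20::nat)" "\<not> prime (21::nat)" "\<not> prime (22::nat)" "\<not> prime (24::nat)" "\<not> prime (25::nat)" "\<not> prime (26::nat)" "\<not> prime (27::nat)" "\<not> prime (28::nat)" "\<not> prime (30::nat)" "\<not> prime (32::nat)" "\<not> prime (33::nat)" "\<not> prime (34::nat)" "\<not> prime (35::nat)" "\<not> prime (36::nat)" "\<not> prime (38::nat)" "\<not> prime (39::nat)" "\<not> prime (40::nat)" "\<not> prime (42::nat)" "\<not> prime (44::nat)" "\<not> prime (45::nat)" "\<not> prime (46::nat)" "\<not> prime (48::nat)" "\<not> prime (49::nat)" "\<not> prime (50::nat)" "\<not> prime (51::nat)" "\<not> prime (52::nat)" "\<not> prime (54::nat)" "\<not> prime (55::nat)" "\<not> prime (56::nat)" "\<not> prime (57::nat)" "\<not> prime (58::nat)" "\<not> prime (60::nat)" "\<not> prime (62::nat)" "\<not> prime (63::nat)" "\<not> prime (64::nat)" "\<not> prime (65::nat)" "\<not> prime (66::nat)" "\<not>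 prime (68::nat)" "\<not> prime (69::nat)" "\<not> prime (70::nat)" "\<not> prime (72::nat)" "\<not> prime (74::nat)" "\<not> prime (75::nat)" "\<not> prime (76::nat)" "\<not> prime (77::nat)" "\<not> prime (78::nat)" "\<not> prime (80::nat)" "\<not> prime (81::nat)" "\<not> prime (82::nat)"
    by (unfold prime_nat_iff' atLeastLessThan_upt, simp_all add: upt_rec)
  ultimately show ?thesis using pr by auto
qed

lemma frob_gen:
  fixes f g :: "int poly" and p :: nat
  assumes pr: "prime p" and p84: "p < 84"
   and a: "f * g = monom 1 n - 1" "n > 0" "\<not> p dvd n"
    "is_unit (lead_coeff f)" "degree f > 0"
    "f dvd (\<Sum>i\<le>degree g. monom (coeff g i) (p * i))"
  shows False
proof -
  have "p \<in> set [2,3,5,7,11,13,17,19,23,29,31,37,41,43,47,53,59,61,67,71,73,79,83]" by (rule small_primes[OF pr p84])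
  then have "p = 2 \<or> p = 3 \<or> p = 5 \<or> p = 7 \<or> p = 11 \<or> p = 13 \<or> p = 17 \<or> p = 19 \<or> p = 23 \<or> p = 29 \<or> p = 31 \<or> p = 37 \<or> p = 41 \<or> p = 43 \<or> p = 47 \<or> p = 53 \<or> p = 59 \<or> p = 61 \<or> p = 67 \<or> p = 71 \<or> p = 73 \<or> p = 79 \<or> p = 83" by simp
  then show False
    using frob_2[OF _ a] frob_3[OF _ a] frob_5[OF _ a] frob_7[OF _ a] frob_11[OF _ a] frob_13[OF _ a] frob_17[OF _ a] frob_19[OF _ a] frob_23[OF _ a] frob_29[OF _ a] frob_31[OF _ a] frob_37[OF _ a] frob_41[OF _ a] frob_43[OF _ a] frob_47[OF _ a] frob_53[OF _ a] frob_59[OF _ a] frob_61[OF _ a] frob_67[OF _ a] frob_71[OF _ a] frob_73[OF _ a] frob_79[OF _ a] frob_83[OF _ a]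
    by blast
qed

lemma poly_xn1: "poly (of_int_poly (monom 1 n - 1 :: int poly)) (w::complex) = w ^ n - 1"
  by (simp add: of_int_poly_hom.hom_minus map_poly_monom poly_monom)

lemma lc_unit:
  fixes f g :: "int poly"
  assumes fg: "f * g = monom 1 n - 1" and n: "n > 0"
  shows "is_unit (lead_coeff f)"
proof -
  have c: "coeff (monom 1 n - 1 :: int poly) n = 1" using n by simp
  have "degree (monom 1 n - 1 :: int poly) \<le> n" by (rule degree_diff_le) (auto simp: degree_monom_le)
  then have dg: "degree (monom 1 n - 1 :: int poly) = n" using le_degree[of "monom 1 n - 1 :: int poly" n] c
    by simp
  have "lead_coeff (f * g) = 1" unfolding fg dg using n by simp
  then have "lead_coeff f * lead_coeff g = 1" by (simp add: lead_coeff_mult)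
  then show ?thesis unfolding dvd_def by (intro exI[of _ "lead_coeff g"]) simp
qed

lemma deg_pos:
  fixes f :: "int poly"
  assumes f: "prime_elem f" and fz: "poly (of_int_poly f) (z::complex) = 0"
  shows "degree f > 0"
proof (rule ccontr)
  assume "\<not> degree f > 0"
  then have "degree f = 0" by simp
  then obtain c where "f = [:c:]" by (metis degree_eq_zeroE)
  moreover have "poly (of_int_poly [:c:]) z = of_int c" by (simp add: poly_altdef)
  ultimately have "f = 0" using fz by simp
  with f show False by simp
qed

lemma root_pow_prime:
  fixes f g :: "int poly" and w :: complex and p :: nat
  assumes fp: "prime_elem f" and fg: "f * g = monom 1 n - 1" and n: "n > 0"
    and pr: "prime p" and pn: "\<not> p dvd n" and p84: "p < 84"
    and fw: "poly (of_int_poly f) w = 0" and wn: "w ^ n = 1"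
  shows "poly (of_int_poly f) (w ^ p) = 0"
proof (rule ccontr)
  assume nz: "poly (of_int_poly f) (w ^ p) \<noteq> 0"
  have "poly (of_int_poly (f * g)) (w ^ p) = 0" unfolding fg poly_xn1
    by (simp add: power_mult[symmetric] mult.commute power_mult wn)
  then have gz: "poly (of_int_poly g) (w ^ p) = 0" using nz by (simp add: of_int_poly_hom.hom_mult)
  define h where "h = (\<Sum>i\<le>degree g. monom (coeff g i) (p * i))"
  have "poly (of_int_poly h) w = (\<Sum>i\<le>degree g. of_int (coeff g i) * w ^ (p * i))"
    unfolding h_def by (simp add: of_int_poly_hom.hom_sum map_poly_monom poly_sum poly_monom)
  also have "\<dots> = poly (of_int_poly g) (w ^ p)"
    by (simp add: poly_altdef power_mult)
  finally have hz: "poly (of_int_poly h) w = 0" using gz by simp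
  have "f dvd h" using common_root_dvd[OF fp fw hz] .
  show False
    by (rule frob_gen[OF pr p84 fg n pn lc_unit[OF fg n] deg_pos[OF fp fw]]) (use \<open>f dvd h\<close> h_def in simp)
qed

lemma root_pow_coprime:
  fixes f g :: "int poly" and w :: complex
  assumes fp: "prime_elem f" and fg: "f * g = monom 1 n - 1" and n: "n > 0"
    and fw: "poly (of_int_poly f) w = 0" and wn: "w ^ n = 1"
  shows "k > 0 \<Longrightarrow> k \<le> 84 \<Longrightarrow> Rings.coprime k n \<Longrightarrow> poly (of_int_poly f) (w ^ k) = 0"
proof (induction k rule: less_induct)
  case (less k)
  show ?case
  proof (cases "k = 1")
    case True then show ?thesis using fw by simp
  next
    case False
    then obtain p where p: "prime p" "p dvd k" using less.prems(1)
      by (metis Suc_lessI One_nat_def prime_factor_nat)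
    then obtain m where km: "k = p * m" by (elim dvdE)
    have m0: "m > 0" using km less.prems(1) by auto
    have mk: "m < k" using km prime_gt_1_nat[OF p(1)] m0 by auto
    have cm: "Rings.coprime m n" using less.prems(3) km by simp
    have m84: "m \<le> 84" using mk less.prems(2) by simp
    have p84: "p < 84"
    proof -
      have "p \<le> k" using p(2) less.prems(1) by (simp add: dvd_imp_le)
      moreover have "p \<noteq> 84" using p(1) by auto
      ultimately show ?thesis using less.prems(2) by simp
    qed
    have pn: "\<not> p dvd n"
    proof
      assume "p dvd n"
      from coprime_common_divisor[OF less.prems(3) p(2) this] p(1) show False by simp
    qed
    have IH: "poly (of_int_poly f) (w ^ m) = 0" using less.IH[OF mk m0 m84 cm] .
    have "(w ^ m) ^ n = 1" by (metis power_mult mult.commute power_one wn)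
    from root_pow_prime[OF fp fg n p(1) pn p84 IH this]
    show ?thesis unfolding km by (simp add: power_mult mult.commute)
  qed
qed

lemma xi_pow: "xi n ^ k = cis (2 * pi * real k / real n)"
  unfolding xi_def DeMoivre by (simp add: field_simps)

lemma xi_pow_n: "n > 0 \<Longrightarrow> xi n ^ n = 1"
  unfolding xi_pow by simp

lemma xi_nz: "xi n \<noteq> 0" unfolding xi_def by simp

lemma xi_pow_ne1: assumes "0 < k" "k < n" shows "xi n ^ k \<noteq> 1"
proof
  assume "xi n ^ k = 1"
  then have "cos (2 * pi * real k / real n) = 1" unfolding xi_pow by (metis cis.sel(1) one_complex.sel(1))
  then obtain m :: int where m: "2 * pi * real k / real n = real_of_int m * 2 * pi" by (auto simp: cos_one_2pi_int)
  have n0: "real n > 0" using assms by simp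
  have "2 * pi * (real k / real n) = 2 * pi * real_of_int m" using m by (simp add: field_simps)
  then have "real k / real n = real_of_int m" using pi_gt_zero
    by (metis mult_cancel_left mult_eq_0_iff pi_neq_zero zero_neq_numeral)
  moreover have "0 < real k / real n" "real k / real n < 1" using assms by auto
  ultimately have "0 < m" "m < 1" by linarith+
  then show False by simp
qed

lemma xi_pow_mod: "n > 0 \<Longrightarrow> xi n ^ k = xi n ^ (k mod n)"
proof -
  assume n: "n > 0"
  have "xi n ^ k = xi n ^ (n * (k div n) + k mod n)" by simp
  also have "\<dots> = (xi n ^ n) ^ (k div n) * xi n ^ (k mod n)" by (simp only: power_add power_mult)
  also have "\<dots> = xi n ^ (k mod n)" using xi_pow_n[OF n] by simp
  finally show ?thesis .
qed

lemma xi_pow_eq: assumes n: "n > 0" and e: "xi n ^ a = xi n ^ b" and ab: "a \<le> b"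
  shows "(b - a) mod n = 0"
proof (rule ccontr)
  assume ne: "(b - a) mod n \<noteq> 0"
  have "xi n ^ b = xi n ^ a * xi n ^ (b - a)" using ab by (simp add: power_add[symmetric])
  then have "xi n ^ (b - a) = 1" using e xi_nz by simp
  then have "xi n ^ ((b - a) mod n) = 1" using xi_pow_mod[OF n] by metis
  with xi_pow_ne1[of "(b - a) mod n" n] ne n show False by auto
qed

lemma xi_inj: assumes n: "n > 0" and A: "A \<subseteq> {1..n}" shows "inj_on (\<lambda>k. xi n ^ k) A"
proof (rule inj_onI)
  fix a b assume a: "a \<in> A" and b: "b \<in> A" and e: "xi n ^ a = xi n ^ b"
  show "a = b"
  proof (cases "a \<le> b")
    case True
    have "a \<in> {1..n}" "b \<in> {1..n}" using a b A by auto
    then have "b - a < n" by auto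
    then have "b - a = 0" using xi_pow_eq[OF n e True] by simp
    then show ?thesis using True by simp
  next
    case False
    have "a \<in> {1..n}" "b \<in> {1..n}" using a b A by auto
    then have "a - b < n" by auto
    then have "a - b = 0" using xi_pow_eq[OF n e[symmetric]] False by simp
    then show ?thesis using False by simp
  qed
qed

lemma roots_unity_xi: assumes n: "n > 0" and w: "w ^ n = 1" shows "\<exists>j\<in>{1..n}. w = xi n ^ j"
proof -
  have sub: "(\<lambda>k. xi n ^ k) ` {1..n} \<subseteq> {w. w ^ n = 1}"
  proof (safe)
    fix k :: nat
    have "(xi n ^ k) ^ n = (xi n ^ n) ^ k" by (simp add: power_mult[symmetric] mult.commute)
    then show "(xi n ^ k) ^ n = 1" by (simp add: xi_pow_n[OF n])
  qed
  have c1: "card ((\<lambda>k. xi n ^ k) ` {1..n}) = n" using card_image[OF xi_inj[OF n order.refl]] by simp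
  have c2: "card {w::complex. w ^ n = 1} = n" using card_roots_unity_eq[OF n] .
  have fin: "finite {w::complex. w ^ n = 1}" using c2 n card_ge_0_finite by force
  have "(\<lambda>k. xi n ^ k) ` {1..n} = {w. w ^ n = 1}"
    using card_subset_eq[OF fin sub] c1 c2 by simp
  with w show ?thesis by blast
qed

lemma xn1_nz: "n > 0 \<Longrightarrow> (monom 1 n - 1 :: int poly) \<noteq> 0"
proof
  assume n: "n > 0" and "(monom 1 n - 1 :: int poly) = 0"
  then have "coeff (monom 1 n - 1 :: int poly) n = 0" by simp
  with n show False by simp
qed

lemma exists_factor:
  assumes n: "n > 0"
  shows "\<exists>f g. prime_elem f \<and> f * g = monom 1 n - 1 \<and> poly (of_int_poly f) (xi n) = 0"
proof -
  define Q :: "int poly" where "Q = monom 1 n - 1"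
  define P where "P = prod_mset (prime_factorization Q)"
  have Q0: "Q \<noteq> 0" unfolding Q_def using xn1_nz[OF n] .
  have zQ: "poly (of_int_poly Q) (xi n) = 0" unfolding Q_def poly_xn1 using xi_pow_n[OF n] by simp
  have "Q dvd P"
  proof -
    have "Q dvd normalize Q" by simp
    also have "normalize Q = normalize P"
      using prod_mset_prime_factorization_weak[OF Q0] unfolding P_def by simp
    also have "\<dots> dvd P" by simp
    finally show ?thesis .
  qed
  then obtain k where Pk: "P = Q * k" by (elim dvdE)
  have "poly (of_int_poly P) (xi n) = 0" unfolding Pk of_int_poly_hom.hom_mult poly_mult zQ by simp
  then have "(\<Prod>p\<in>#prime_factorization Q. poly (of_int_poly p) (xi n)) = 0"
    unfolding P_def of_int_poly_hom.hom_prod_mset poly_prod_mset .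
  then obtain p where p: "p \<in># prime_factorization Q" "poly (of_int_poly p) (xi n) = 0"
    unfolding prod_mset_zero_iff by auto
  have pp: "prime p" using p(1) by (rule in_prime_factors_imp_prime)
  have "p dvd Q" using p(1) by (simp add: in_prime_factors_iff)
  then obtain g where "Q = p * g" by (elim dvdE)
  then have "p * g = monom 1 n - 1" unfolding Q_def by simp
  with pp p(2) prime_imp_prime_elem show ?thesis by blast
qed

lemma deg_ge:
  fixes f g :: "int poly"
  assumes fp: "prime_elem f" and fg: "f * g = monom 1 n - 1" and n: "n > 0"
    and fz: "poly (of_int_poly f) (xi n) = 0" and n84: "n \<le> 84"
  shows "totient n \<le> degree f"
proof -
  have f0: "(of_int_poly f :: complex poly) \<noteq> 0" using fp by (auto simp: prime_elem_def)
  have sub: "(\<lambda>k. xi n ^ k) ` totatives n \<subseteq> {w. poly (of_int_poly f) w = 0}"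
    using root_pow_coprime[OF fp fg n fz xi_pow_n[OF n]] n84 by (auto simp: totatives_def)
  have fin: "finite {w. poly (of_int_poly f :: complex poly) w = 0}" using poly_roots_finite[OF f0] .
  have "totient n = card ((\<lambda>k. xi n ^ k) ` totatives n)"
    unfolding totient_def by (rule card_image[symmetric], rule xi_inj[OF n]) (auto simp: totatives_def)
  also have "\<dots> \<le> card {w. poly (of_int_poly f :: complex poly) w = 0}" using card_mono[OF fin sub] .
  also have "\<dots> \<le> degree (of_int_poly f :: complex poly)" using card_poly_roots_bound[OF f0] .
  finally show ?thesis by simp
qed

lemma xn1_complex: "(of_int_poly (monom 1 n - 1 :: int poly) :: complex poly) = monom 1 n - 1"
  by (simp add: of_int_poly_hom.hom_minus map_poly_monom)

lemma xn1_rsquarefree: assumes n: "n > 0" shows "rsquarefree (monom 1 n - 1 :: complex poly)"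
proof -
  have nz: "(monom 1 n - 1 :: complex poly) \<noteq> 0"
  proof
    assume "(monom 1 n - 1 :: complex poly) = 0"
    then have "coeff (monom 1 n - 1 :: complex poly) n = 0" by simp
    with n show False by simp
  qed
  have c: "coeff (monom 1 n - 1 :: complex poly) n = 1" using n by simp
  have "degree (monom 1 n - 1 :: complex poly) \<le> n" by (rule degree_diff_le) (auto simp: degree_monom_le)
  then have dg: "degree (monom 1 n - 1 :: complex poly) = n" using le_degree[of "monom 1 n - 1 :: complex poly" n] c
    by simp
  have "{x. poly (monom 1 n - 1 :: complex poly) x = 0} = {z. z ^ n = 1}" by (auto simp: poly_monom)
  then have "card {x. poly (monom 1 n - 1 :: complex poly) x = 0} = degree (monom 1 n - 1 :: complex poly)"
    using card_roots_unity_eq[OF n] dg by simp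
  then show ?thesis using rsquarefree_card_degree[OF nz] by simp
qed

lemma deg_le:
  fixes f g :: "int poly"
  assumes fp: "prime_elem f" and fg: "f * g = monom 1 n - 1" and n: "n > 0"
    and fz: "poly (of_int_poly f) (xi n) = 0"
  shows "degree f \<le> totient n"
proof -
  define F :: "complex poly" where "F = of_int_poly f"
  have F0: "F \<noteq> 0" using fp by (auto simp: prime_elem_def F_def)
  have FQ: "F dvd monom 1 n - 1" unfolding F_def xn1_complex[symmetric] fg[symmetric]
    by (rule of_int_poly_hom.hom_dvd) simp
  have rs: "rsquarefree F" unfolding rsquarefree_def
  proof (intro conjI allI F0)
    fix a
    have "Polynomial.order a F \<le> Polynomial.order a (monom 1 n - 1 :: complex poly)"
      using dvd_imp_order_le[OF _ FQ] xn1_rsquarefree[OF n] by (auto simp: rsquarefree_def)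
    moreover have "Polynomial.order a (monom 1 n - 1 :: complex poly) \<le> 1"
      using xn1_rsquarefree[OF n] unfolding rsquarefree_def by (metis order.refl le_numeral_extra(1) le_zero_eq linear)
    ultimately show "Polynomial.order a F = 0 \<or> Polynomial.order a F = 1" by linarith
  qed
  have sub: "{w. poly F w = 0} \<subseteq> (\<lambda>k. xi n ^ k) ` totatives n"
  proof
    fix w assume "w \<in> {w. poly F w = 0}"
    then have Fw: "poly F w = 0" by simp
    have "w ^ n = 1"
    proof -
      obtain k where "monom 1 n - 1 = F * k" using FQ by (elim dvdE)
      then have "poly (monom 1 n - 1 :: complex poly) w = 0" using Fw by simp
      then show ?thesis by (simp add: poly_monom)
    qed
    then obtain j where j: "j \<in> {1..n}" "w = xi n ^ j" using roots_unity_xi[OF n] by blast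
    have "Rings.coprime j n"
    proof (rule ccontr)
      assume nc: "\<not> Rings.coprime j n"
      define d where "d = gcd j n"
      have d1: "d \<noteq> 1" using nc unfolding d_def by (simp add: coprime_iff_gcd_eq_1)
      have dn: "d dvd n" "d dvd j" unfolding d_def by auto
      have d0: "d > 0" unfolding d_def using n by simp
      define m where "m = n div d"
      have mn: "n = d * m" unfolding m_def using dn(1) by simp
      have m0: "m > 0" using mn n by (cases m) auto
      have mlt: "m < n" using mn d0 d1 m0 by (cases d) auto
      obtain j' where jj: "j = d * j'" using dn(2) by (elim dvdE)
      have "w ^ m = 1"
      proof -
        have "w ^ m = (xi n ^ n) ^ j'" unfolding j(2) power_mult[symmetric] mn jj by (simp add: ac_simps)
        then show ?thesis using xi_pow_n[OF n] by simp
      qed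
      then have hw: "poly (of_int_poly (monom 1 m - 1 :: int poly)) w = 0" by (simp add: poly_xn1)
      have "f dvd monom 1 m - 1" using common_root_dvd[OF fp _ hw] Fw unfolding F_def by simp
      then obtain k where "monom 1 m - 1 = f * k" by (elim dvdE)
      then have "poly (of_int_poly (monom 1 m - 1 :: int poly)) (xi n) = 0" using fz
        by (simp add: of_int_poly_hom.hom_mult)
      then have "xi n ^ m = 1" by (simp add: poly_xn1)
      with xi_pow_ne1[OF m0 mlt] show False by simp
    qed
    then show "w \<in> (\<lambda>k. xi n ^ k) ` totatives n" using j by (auto simp: totatives_def)
  qed
  have "degree f = degree F" unfolding F_def by simp
  also have "\<dots> = card {w. poly F w = 0}" using rsquarefree_card_degree[OF F0] rs by simp
  also have "\<dots> \<le> card ((\<lambda>k. xi n ^ k) ` totatives n)" by (rule card_mono[OF _ sub]) simp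
  also have "\<dots> \<le> totient n" unfolding totient_def by (rule card_image_le) simp
  finally show ?thesis .
qed



definition ispan :: "nat \<Rightarrow> complex set" where
  "ispan n = range (\<lambda>c. \<Sum>k<totient n. of_int (c k) * xi n ^ k)"

lemma Mring_ispan: "Mring n = ispan n"
proof
  show "Mring n \<subseteq> ispan n" unfolding Mring_def ispan_def emb_def by auto
  show "ispan n \<subseteq> Mring n"
  proof
    fix z assume "z \<in> ispan n"
    then obtain c where z: "z = (\<Sum>k<totient n. of_int (c k) * xi n ^ k)" unfolding ispan_def by auto
    have "emb n (vec (totient n) c) = z" unfolding z emb_def by (intro sum.cong) auto
    moreover have "vec (totient n) c \<in> Lam n" unfolding Lam_def by simp
    ultimately show "z \<in> Mring n" unfolding Mring_def by blast
  qed
qed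

lemma ispanI: "z = (\<Sum>k<totient n. of_int (c k) * xi n ^ k) \<Longrightarrow> z \<in> ispan n"
  unfolding ispan_def by blast

lemma ispan_0: "0 \<in> ispan n"
  unfolding ispan_def by (rule range_eqI[of _ _ "\<lambda>_. 0"]) simp

lemma ispan_add: "a \<in> ispan n \<Longrightarrow> b \<in> ispan n \<Longrightarrow> a + b \<in> ispan n"
proof -
  assume "a \<in> ispan n" "b \<in> ispan n"
  then obtain c c' where a: "a = (\<Sum>k<totient n. of_int (c k) * xi n ^ k)"
    and b: "b = (\<Sum>k<totient n. of_int (c' k) * xi n ^ k)" unfolding ispan_def by auto
  have "a + b = (\<Sum>k<totient n. of_int (c k + c' k) * xi n ^ k)"
    unfolding a b sum.distrib[symmetric] by (rule sum.cong) (simp_all add: distrib_right)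
  then show ?thesis by (rule ispanI)
qed

lemma ispan_smult: "a \<in> ispan n \<Longrightarrow> of_int m * a \<in> ispan n"
proof -
  assume "a \<in> ispan n"
  then obtain c where a: "a = (\<Sum>k<totient n. of_int (c k) * xi n ^ k)" unfolding ispan_def by auto
  have "of_int m * a = (\<Sum>k<totient n. of_int (m * c k) * xi n ^ k)"
    unfolding a sum_distrib_left by (rule sum.cong) simp_all
  then show ?thesis by (rule ispanI)
qed

lemma ispan_uminus: "a \<in> ispan n \<Longrightarrow> - a \<in> ispan n"
  using ispan_smult[of a n "-1"] by simp

lemma ispan_diff: "a \<in> ispan n \<Longrightarrow> b \<in> ispan n \<Longrightarrow> a - b \<in> ispan n"
  using ispan_add[of a n "- b"] ispan_uminus by simp

lemma ispan_sum: "finite A \<Longrightarrow> (\<And>i. i \<in> A \<Longrightarrow> g i \<in> ispan n) \<Longrightarrow> sum g A \<in> ispan n"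
  by (induction A rule: finite_induct) (auto intro: ispan_0 ispan_add)

lemma ispan_low: "k < totient n \<Longrightarrow> xi n ^ k \<in> ispan n"
proof -
  assume k: "k < totient n"
  have "(\<Sum>j<totient n. of_int (if j = k then 1 else 0) * xi n ^ j) = (\<Sum>j<totient n. if j = k then xi n ^ j else 0)"
    by (rule sum.cong) auto
  also have "\<dots> = xi n ^ k" using k by (simp add: sum.delta)
  finally have "xi n ^ k = (\<Sum>j<totient n. of_int (if j = k then 1 else 0) * xi n ^ j)" by simp
  then show ?thesis by (rule ispanI)
qed

lemma min_poly:
  assumes n: "n > 0" "n \<le> 84"
  shows "\<exists>f g. prime_elem f \<and> f * g = monom 1 n - 1 \<and> poly (of_int_poly f) (xi n) = 0 \<and> degree f = totient n"
proof -
  obtain f g where fg: "prime_elem f" "f * g = monom 1 n - 1" "poly (of_int_poly f) (xi n) = 0"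
    using exists_factor[OF n(1)] by blast
  moreover have "degree f = totient n" using deg_ge[OF fg(1,2) n(1) fg(3) n(2)] deg_le[OF fg(1,2) n(1) fg(3)] by simp
  ultimately show ?thesis by blast
qed

lemma ispan_pow:
  assumes n: "n > 0" "n \<le> 84"
  shows "xi n ^ m \<in> ispan n"
proof -
  obtain f g where fp: "prime_elem f" and fg: "f * g = monom 1 n - 1"
    and fz: "poly (of_int_poly f) (xi n) = 0" and df: "degree f = totient n"
    using min_poly[OF n] by blast
  define d where "d = totient n"
  define u where "u = lead_coeff f"
  have "is_unit u" unfolding u_def by (rule lc_unit[OF fg n(1)])
  then have uu: "u * u = 1" by (auto simp: zdvd1_eq abs_if split: if_splits)
  have "0 = (\<Sum>k\<le>d. of_int (coeff f k) * xi n ^ k)"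
    using fz unfolding poly_altdef by (simp add: df d_def)
  also have "\<dots> = (\<Sum>k<d. of_int (coeff f k) * xi n ^ k) + of_int u * xi n ^ d"
    unfolding u_def df d_def lessThan_Suc_atMost[symmetric] by (simp add: df)
  finally have key: "of_int u * xi n ^ d = - (\<Sum>k<d. of_int (coeff f k) * xi n ^ k)"
    by (simp add: eq_neg_iff_add_eq_0 add.commute)
  show ?thesis
  proof (induction m rule: less_induct)
    case (less m)
    show ?case
    proof (cases "m < d")
      case True then show ?thesis using ispan_low unfolding d_def by blast
    next
      case False
      have "of_int u * xi n ^ m = xi n ^ (m - d) * (of_int u * xi n ^ d)"
        using False by (simp add: power_add[symmetric])
      also have "\<dots> = - (\<Sum>k<d. of_int (coeff f k) * xi n ^ (m - d + k))"
        unfolding key by (simp add: sum_distrib_left power_add algebra_simps)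
      finally have e: "of_int u * xi n ^ m = - (\<Sum>k<d. of_int (coeff f k) * xi n ^ (m - d + k))" .
      have "(\<Sum>k<d. of_int (coeff f k) * xi n ^ (m - d + k)) \<in> ispan n"
      proof (rule ispan_sum)
        fix k assume "k \<in> {..<d}"
        then have "m - d + k < m" using False by auto
        then show "of_int (coeff f k) * xi n ^ (m - d + k) \<in> ispan n" by (intro ispan_smult less.IH)
      qed simp
      then have "of_int u * (of_int u * xi n ^ m) \<in> ispan n" unfolding e by (intro ispan_smult ispan_uminus)
      moreover have "of_int u * (of_int u * xi n ^ m) = xi n ^ m"
        using uu by (simp add: mult.assoc[symmetric] of_int_mult[symmetric] del: of_int_mult)
      ultimately show ?thesis by simp
    qed
  qed
qed

lemma ispan_indep:
  assumes n: "n > 0" "n \<le> 84" and z: "(\<Sum>j<totient n. of_int (c j) * xi n ^ j) = (0::complex)" and k: "k < totient n"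
  shows "c k = 0"
proof -
  obtain f g where fp: "prime_elem f" and fg: "f * g = monom 1 n - 1"
    and fz: "poly (of_int_poly f) (xi n) = 0" and df: "degree f = totient n"
    using min_poly[OF n] by blast
  define d where "d = totient n"
  have d0: "d > 0" unfolding d_def using n by simp
  define h :: "int poly" where "h = (\<Sum>j<d. monom (c j) j)"
  have ch: "coeff h j = (if j < d then c j else 0)" for j
    unfolding h_def coeff_sum by (simp add: coeff_monom sum.delta' cong: if_cong)
  have "poly (of_int_poly h) (xi n) = (\<Sum>j<d. of_int (c j) * xi n ^ j)"
    unfolding h_def by (simp add: of_int_poly_hom.hom_sum map_poly_monom poly_sum poly_monom)
  then have hz: "poly (of_int_poly h) (xi n) = 0" using z unfolding d_def by simp
  have "h = 0"
  proof (rule ccontr)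
    assume h0: "h \<noteq> 0"
    have "f dvd h" by (rule common_root_dvd[OF fp fz hz])
    then have "degree f \<le> degree h" using h0 by (rule dvd_imp_degree_le)
    moreover have "degree h \<le> d - 1" by (rule degree_le) (auto simp: ch)
    ultimately show False using df d0 unfolding d_def by linarith
  qed
  then have "coeff h k = 0" by simp
  then show ?thesis using ch[of k] k unfolding d_def by simp
qed

lemma emb_inj: assumes n: "n > 0" "n \<le> 84" shows "inj_on (emb n) (Lam n)"
proof (rule inj_onI)
  fix v w assume v: "v \<in> Lam n" and w: "w \<in> Lam n" and e: "emb n v = emb n w"
  have "(\<Sum>j<totient n. of_int (v $ j - w $ j) * xi n ^ j) = emb n v - emb n w"
    unfolding emb_def sum_subtractf[symmetric] by (rule sum.cong) (simp_all add: algebra_simps)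
  then have z: "(\<Sum>j<totient n. of_int (v $ j - w $ j) * xi n ^ j) = (0::complex)" using e by simp
  show "v = w"
  proof (rule eq_vecI)
    show "dim_vec v = dim_vec w" using v w unfolding Lam_def by simp
    fix i assume "i < dim_vec w"
    then have "i < totient n" using w unfolding Lam_def by simp
    from ispan_indep[OF n z this] show "v $ i = w $ i" by simp
  qed
qed

lemma coords_emb: assumes n: "n > 0" "n \<le> 84" and v: "v \<in> Lam n" shows "coords n (emb n v) = v"
  unfolding coords_def
proof (rule the_equality)
  show "v \<in> Lam n \<and> emb n v = emb n v" using v by simp
  fix w assume "w \<in> Lam n \<and> emb n w = emb n v"
  then show "w = v" using inj_onD[OF emb_inj[OF n]] v by blast
qed

lemma coords: assumes n: "n > 0" "n \<le> 84" and z: "z \<in> Mring n"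
  shows "coords n z \<in> Lam n" "emb n (coords n z) = z"
proof -
  obtain v where v: "v \<in> Lam n" "z = emb n v" using z unfolding Mring_def by blast
  show "coords n z \<in> Lam n" "emb n (coords n z) = z" unfolding v(2) coords_emb[OF n v(1)] using v by auto
qed

lemma ispan_elim: "a \<in> ispan n \<Longrightarrow> (\<And>c. a = (\<Sum>k<totient n. of_int (c k) * xi n ^ k) \<Longrightarrow> P) \<Longrightarrow> P"
  unfolding ispan_def by blast

lemma ispan_mult_pow: assumes n: "n > 0" "n \<le> 84" and a: "a \<in> ispan n" shows "a * xi n ^ j \<in> ispan n"
proof -
  obtain c where a: "a = (\<Sum>k<totient n. of_int (c k) * xi n ^ k)" using a by (rule ispan_elim)
  have "a * xi n ^ j = (\<Sum>k<totient n. of_int (c k) * xi n ^ (k + j))"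
    unfolding a sum_distrib_right by (rule sum.cong) (simp_all add: power_add mult.assoc)
  also have "\<dots> \<in> ispan n" by (intro ispan_sum ispan_smult ispan_pow[OF n]) simp
  finally show ?thesis .
qed

lemma ispan_mult: assumes n: "n > 0" "n \<le> 84" and a: "a \<in> ispan n" and b: "b \<in> ispan n" shows "a * b \<in> ispan n"
proof -
  obtain c where b: "b = (\<Sum>k<totient n. of_int (c k) * xi n ^ k)" using b by (rule ispan_elim)
  have "a * b = (\<Sum>k<totient n. of_int (c k) * (a * xi n ^ k))"
    unfolding b sum_distrib_left by (rule sum.cong) (simp_all add: ac_simps)
  also have "\<dots> \<in> ispan n" by (intro ispan_sum ispan_smult ispan_mult_pow[OF n a]) simp
  finally show ?thesis .
qed

lemma cnj_xi: assumes n: "n > 0" shows "cnj (xi n) = xi n ^ (n - 1)"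
proof -
  have "xi n * cnj (xi n) = 1" unfolding xi_def by (simp add: complex_mult_cnj)
  moreover have "xi n * xi n ^ (n - 1) = 1"
  proof -
    have "xi n * xi n ^ (n - 1) = xi n ^ Suc (n - 1)" by simp
    also have "Suc (n - 1) = n" using n by simp
    finally show ?thesis using xi_pow_n[OF n] by simp
  qed
  ultimately have "xi n * cnj (xi n) = xi n * xi n ^ (n - 1)" by simp
  then show ?thesis using xi_nz[of n] by simp
qed

lemma ispan_cnj: assumes n: "n > 0" "n \<le> 84" and a: "a \<in> ispan n" shows "cnj a \<in> ispan n"
proof -
  obtain c where a: "a = (\<Sum>k<totient n. of_int (c k) * xi n ^ k)" using a by (rule ispan_elim)
  have "cnj a = (\<Sum>k<totient n. of_int (c k) * xi n ^ ((n - 1) * k))"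
    unfolding a cnj_sum by (rule sum.cong) (simp_all add: cnj_xi[OF n(1)] power_mult)
  also have "\<dots> \<in> ispan n" by (intro ispan_sum ispan_smult ispan_pow[OF n]) simp
  finally show ?thesis .
qed

lemma zetaN_ispan: assumes n: "n > 0" "n \<le> 84" shows "zetaN n \<in> ispan n"
proof (cases "even n")
  case True
  then have "zetaN n = xi n ^ 1" unfolding zetaN_def xi_def NN_def by simp
  then show ?thesis using ispan_pow[OF n, of 1] by simp
next
  case False
  then obtain m where m: "n = 2 * m + 1" by (elim oddE) simp
  have "xi n ^ (m + 1) = cis (2 * pi * real (m + 1) / real n)" by (rule xi_pow)
  also have "2 * pi * real (m + 1) / real n = pi + 2 * pi / real (NN n)"
    using False unfolding NN_def m by (simp add: field_simps)
  also have "cis (pi + 2 * pi / real (NN n)) = - zetaN n"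
    unfolding zetaN_def cis_mult[symmetric] by simp
  finally have "zetaN n = - (xi n ^ (m + 1))" by simp
  then show ?thesis using ispan_uminus[OF ispan_pow[OF n, of "m + 1"]] by simp
qed

lemma zetaN_cnj: "zetaN n * cnj (zetaN n) = 1"
  unfolding zetaN_def by (simp add: complex_mult_cnj)



lemma Mring_mult: "n > 0 \<Longrightarrow> n \<le> 84 \<Longrightarrow> a \<in> Mring n \<Longrightarrow> b \<in> Mring n \<Longrightarrow> a * b \<in> Mring n"
  unfolding Mring_ispan by (rule ispan_mult)

lemma Mring_pow: "n > 0 \<Longrightarrow> n \<le> 84 \<Longrightarrow> xi n ^ k \<in> Mring n"
  unfolding Mring_ispan by (rule ispan_pow)

lemma Mring_cnj: "n > 0 \<Longrightarrow> n \<le> 84 \<Longrightarrow> a \<in> Mring n \<Longrightarrow> cnj a \<in> Mring n"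
  unfolding Mring_ispan by (rule ispan_cnj)

lemma Mring_zetaN: "n > 0 \<Longrightarrow> n \<le> 84 \<Longrightarrow> zetaN n \<in> Mring n"
  unfolding Mring_ispan by (rule zetaN_ispan)

lemma mat_action:
  fixes h :: "nat \<Rightarrow> complex"
  assumes n: "n > 0" "n \<le> 84" and hM: "\<And>k. k < totient n \<Longrightarrow> h k \<in> Mring n" and v: "v \<in> Lam n"
  shows "mat (totient n) (totient n) (\<lambda>(i,k). coords n (h k) $ i) *\<^sub>v v \<in> Lam n"
    and "emb n (mat (totient n) (totient n) (\<lambda>(i,k). coords n (h k) $ i) *\<^sub>v v) = (\<Sum>k<totient n. of_int (v $ k) * h k)"
proof -
  define d where "d = totient n"
  define M where "M = mat d d (\<lambda>(i,k). coords n (h k) $ i)"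
  have vd: "dim_vec v = d" using v unfolding Lam_def d_def by simp
  show "mat (totient n) (totient n) (\<lambda>(i,k). coords n (h k) $ i) *\<^sub>v v \<in> Lam n"
    unfolding Lam_def carrier_vec_def by simp
  have Mi: "(M *\<^sub>v v) $ i = (\<Sum>k<d. coords n (h k) $ i * v $ k)" if i: "i < d" for i
    using i vd unfolding M_def by (simp add: scalar_prod_def lessThan_atLeast0)
  have "emb n (M *\<^sub>v v) = (\<Sum>i<d. of_int ((M *\<^sub>v v) $ i) * xi n ^ i)" unfolding emb_def d_def ..
  also have "\<dots> = (\<Sum>i<d. \<Sum>k<d. of_int (v $ k) * (of_int (coords n (h k) $ i) * xi n ^ i))"
    by (rule sum.cong) (simp_all add: Mi sum_distrib_right sum_distrib_left mult.commute mult.left_commute)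
  also have "\<dots> = (\<Sum>k<d. of_int (v $ k) * (\<Sum>i<d. of_int (coords n (h k) $ i) * xi n ^ i))"
    by (subst sum.swap) (simp add: sum_distrib_left)
  also have "\<dots> = (\<Sum>k<d. of_int (v $ k) * h k)"
  proof (rule sum.cong)
    fix k assume "k \<in> {..<d}"
    then have "h k \<in> Mring n" using hM unfolding d_def by simp
    then have "emb n (coords n (h k)) = h k" by (rule coords(2)[OF n])
    then show "of_int (v $ k) * (\<Sum>i<d. of_int (coords n (h k) $ i) * xi n ^ i) = of_int (v $ k) * h k"
      unfolding emb_def d_def by simp
  qed simp
  finally show "emb n (mat (totient n) (totient n) (\<lambda>(i,k). coords n (h k) $ i) *\<^sub>v v) = (\<Sum>k<totient n. of_int (v $ k) * h k)"
    unfolding M_def d_def .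
qed

lemma phi1_act:
  assumes n: "n > 0" "n \<le> 84" and v: "v \<in> Lam n"
  shows "phi1_mat n *\<^sub>v v \<in> Lam n" "emb n (phi1_mat n *\<^sub>v v) = zetaN n * emb n v"
proof -
  have hM: "\<And>k. zetaN n * xi n ^ k \<in> Mring n" using Mring_mult[OF n Mring_zetaN[OF n] Mring_pow[OF n]] .
  show "phi1_mat n *\<^sub>v v \<in> Lam n" unfolding phi1_mat_def by (rule mat_action(1)[OF n hM v])
  show "emb n (phi1_mat n *\<^sub>v v) = zetaN n * emb n v" unfolding phi1_mat_def mat_action(2)[OF n hM v]
    unfolding emb_def sum_distrib_left by (rule sum.cong) (simp_all add: ac_simps)
qed

lemma phi2_act:
  assumes n: "n > 0" "n \<le> 84" and v: "v \<in> Lam n"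
  shows "phi2_mat n *\<^sub>v v \<in> Lam n" "emb n (phi2_mat n *\<^sub>v v) = cnj (emb n v)"
proof -
  have hM: "\<And>k. cnj (xi n ^ k) \<in> Mring n" using Mring_cnj[OF n Mring_pow[OF n]] .
  show "phi2_mat n *\<^sub>v v \<in> Lam n" unfolding phi2_mat_def by (rule mat_action(1)[OF n hM v])
  show "emb n (phi2_mat n *\<^sub>v v) = cnj (emb n v)" unfolding phi2_mat_def mat_action(2)[OF n hM v]
    unfolding emb_def cnj_sum by (rule sum.cong) simp_all
qed



lemma coset_self: "x \<in> carrier_vec d \<Longrightarrow> 0\<^sub>v d \<in> L \<Longrightarrow> x \<in> coset L x"
  unfolding coset_def by (rule CollectI, rule exI[of _ "0\<^sub>v d"]) simp

lemma det_nonzero: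
  fixes S :: "int mat"
  assumes S: "S \<in> carrier_mat d d" and L: "L = {S *\<^sub>v c | c. c \<in> carrier_vec d}"
    and fin: "finite (coset L ` carrier_vec d)"
  shows "det S \<noteq> 0"
proof
  assume "det S = 0"
  then have "det (transpose_mat S) = 0" using det_transpose[OF S] by simp
  then obtain w where w: "w \<in> carrier_vec d" "w \<noteq> 0\<^sub>v d" "transpose_mat S *\<^sub>v w = 0\<^sub>v d"
    using det_0_iff_vec_prod_zero[of "transpose_mat S" d] S by auto
  have wL: "w \<bullet> l = 0" if l: "l \<in> L" for l
  proof -
    obtain c where c: "c \<in> carrier_vec d" "l = S *\<^sub>v c" using l L by auto
    have "w \<bullet> l = (transpose_mat S *\<^sub>v w) \<bullet> c" unfolding c(2) by (rule transpose_vec_mult_scalar[OF S c(1) w(1), symmetric])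
    also have "\<dots> = 0" using w(3) c(1) by simp
    finally show ?thesis .
  qed
  have L0: "0\<^sub>v d \<in> L" using L S by (auto intro!: exI[of _ "0\<^sub>v d"])
  have LC: "L \<subseteq> carrier_vec d" using L S by auto
  obtain i where i: "i < d" "w $ i \<noteq> 0" using w(1,2) by (metis eq_vecI carrier_vecD index_zero_vec(1) index_zero_vec(2))
  define e :: "nat \<Rightarrow> int vec" where "e m = vec d (\<lambda>j. if j = i then int m else 0)" for m
  have eC: "e m \<in> carrier_vec d" for m unfolding e_def by simp
  have we: "w \<bullet> e m = w $ i * int m" for m
  proof -
    have "w \<bullet> e m = (\<Sum>j\<in>{0..<d}. w $ j * (if j = i then int m else 0))"
      unfolding scalar_prod_def e_def by (intro sum.cong) auto
    also have "\<dots> = w $ i * int m" using i(1) by (simp add: if_distrib sum.delta cong: if_cong)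
    finally show ?thesis .
  qed
  have "inj (\<lambda>m. coset L (e m))"
  proof (rule injI)
    fix a b assume eq: "coset L (e a) = coset L (e b)"
    have "e a \<in> coset L (e b)" using coset_self[OF eC L0] eq by metis
    then obtain l where l: "l \<in> L" "e a = e b + l" unfolding coset_def by auto
    have "w \<bullet> e a = w \<bullet> e b + w \<bullet> l" unfolding l(2) using w(1) eC LC l(1) by (intro scalar_prod_add_distrib) auto
    then have "w $ i * int a = w $ i * int b" using wL[OF l(1)] we by simp
    then show "a = b" using i(2) by simp
  qed
  moreover have "range (\<lambda>m. coset L (e m)) \<subseteq> coset L ` carrier_vec d" using eC by auto
  ultimately have "finite (UNIV :: nat set)" using fin by (meson finite_imageD finite_subset)
  then show False by simp
qed

lemma map_mat_inj: "map_mat rat_of_int A = map_mat rat_of_int B \<Longrightarrow> A \<in> carrier_mat n m \<Longrightarrow> B \<in> carrier_mat n m \<Longrightarrow> A = B"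
proof -
  assume e: "map_mat rat_of_int A = map_mat rat_of_int B" and A: "A \<in> carrier_mat n m" and B: "B \<in> carrier_mat n m"
  show "A = B"
  proof (rule eq_matI)
    fix i j assume "i < dim_row B" "j < dim_col B"
    then have "map_mat rat_of_int A $$ (i, j) = map_mat rat_of_int B $$ (i, j)" using e by simp
    then show "A $$ (i, j) = B $$ (i, j)" using A B \<open>i < dim_row B\<close> \<open>j < dim_col B\<close> by simp
  qed (use A B in auto)
qed

lemma mat_condition:
  fixes S B :: "int mat"
  assumes S: "S \<in> carrier_mat d d" and B: "B \<in> carrier_mat d d" and dS: "det S \<noteq> 0"
    and L: "L = {S *\<^sub>v c | c. c \<in> carrier_vec d}"
  shows "(\<forall>v\<in>L. B *\<^sub>v v \<in> L) \<longleftrightarrow>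
    (\<exists>Sinv T. mat_inverse (map_mat rat_of_int S) = Some Sinv \<and>
       T \<in> carrier_mat d d \<and>
       map_mat rat_of_int T = Sinv * map_mat rat_of_int B * map_mat rat_of_int S)"
proof -
  define SQ where "SQ = map_mat rat_of_int S"
  define BQ where "BQ = map_mat rat_of_int B"
  have SQ: "SQ \<in> carrier_mat d d" unfolding SQ_def using S by simp
  have BQ: "BQ \<in> carrier_mat d d" unfolding BQ_def using B by simp
  have "det SQ \<noteq> 0" unfolding SQ_def of_int_hom.hom_det using dS by simp
  then have U: "SQ \<in> Units (ring_mat TYPE(rat) d d)" by (rule det_non_zero_imp_unit[OF SQ])
  obtain Sinv where Si: "mat_inverse SQ = Some Sinv"
    using mat_inverse(1)[OF SQ, where b=d] U by (cases "mat_inverse SQ") auto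
  from mat_inverse(2)[OF SQ Si] have Si1: "SQ * Sinv = 1\<^sub>m d" "Sinv * SQ = 1\<^sub>m d" "Sinv \<in> carrier_mat d d" by auto
  show ?thesis unfolding SQ_def[symmetric] BQ_def[symmetric]
  proof
    assume inv: "\<forall>v\<in>L. B *\<^sub>v v \<in> L"
    have "\<forall>k. \<exists>c. k < d \<longrightarrow> c \<in> carrier_vec d \<and> B *\<^sub>v col S k = S *\<^sub>v c"
    proof (intro allI)
      fix k
      show "\<exists>c. k < d \<longrightarrow> c \<in> carrier_vec d \<and> B *\<^sub>v col S k = S *\<^sub>v c"
      proof (cases "k < d")
        case True
        have "col S k = S *\<^sub>v unit_vec d k"
        proof (rule eq_vecI)
          fix i assume "i < dim_vec (S *\<^sub>v unit_vec d k)"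
          then have i: "i < d" using S by simp
          have "(S *\<^sub>v unit_vec d k) $ i = row S i \<bullet> unit_vec d k" using i S by simp
          also have "\<dots> = S $$ (i, k)" using True i S by (simp add: scalar_prod_right_unit)
          finally show "col S k $ i = (S *\<^sub>v unit_vec d k) $ i" using i S True by simp
        qed (use S in simp)
        then have "col S k \<in> L" unfolding L using True by auto
        then have "B *\<^sub>v col S k \<in> L" using inv by blast
        then show ?thesis unfolding L by auto
      qed simp
    qed
    then obtain c where c: "\<And>k. k < d \<Longrightarrow> c k \<in> carrier_vec d \<and> B *\<^sub>v col S k = S *\<^sub>v c k"
      by metis
    define T where "T = mat d d (\<lambda>(i,k). c k $ i)"
    have T: "T \<in> carrier_mat d d" unfolding T_def by simp
    have colT: "col T k = c k" if "k < d" for k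
      unfolding T_def using c[OF that] that by (auto simp: col_mat)
    have BST: "B * S = S * T"
    proof (rule eq_matI)
      fix i k assume i: "i < dim_row (S * T)" and k: "k < dim_col (S * T)"
      then have i': "i < d" and k': "k < d" using S T by auto
      have "(B * S) $$ (i, k) = (B *\<^sub>v col S k) $ i" using i' k' B S by simp
      also have "\<dots> = (S *\<^sub>v c k) $ i" using c[OF k'] by simp
      also have "\<dots> = (S * T) $$ (i, k)" using i' k' S T colT[OF k'] by simp
      finally show "(B * S) $$ (i, k) = (S * T) $$ (i, k)" .
    qed (use B S T in auto)
    have TC: "map_mat rat_of_int T \<in> carrier_mat d d" using T by simp
    have "Sinv * (SQ * map_mat rat_of_int T) = (Sinv * SQ) * map_mat rat_of_int T"
      by (rule assoc_mult_mat[OF Si1(3) SQ TC, symmetric])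
    also have "\<dots> = map_mat rat_of_int T" using Si1(2) TC by simp
    finally have "map_mat rat_of_int T = Sinv * (SQ * map_mat rat_of_int T)" by simp
    also have "SQ * map_mat rat_of_int T = BQ * SQ"
      unfolding SQ_def BQ_def of_int_hom.mat_hom_mult[OF S T, symmetric] of_int_hom.mat_hom_mult[OF B S, symmetric] BST ..
    also have "Sinv * (BQ * SQ) = Sinv * BQ * SQ"
      using Si1 SQ BQ by (simp add: assoc_mult_mat[of _ d d _ d _ d])
    finally show "\<exists>Sinv T. mat_inverse SQ = Some Sinv \<and> T \<in> carrier_mat d d \<and> map_mat rat_of_int T = Sinv * BQ * SQ"
      using Si T by blast
  next
    assume "\<exists>Sinv T. mat_inverse SQ = Some Sinv \<and> T \<in> carrier_mat d d \<and> map_mat rat_of_int T = Sinv * BQ * SQ"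
    then obtain Sinv' T where Si': "mat_inverse SQ = Some Sinv'" and T: "T \<in> carrier_mat d d"
      and TQ: "map_mat rat_of_int T = Sinv' * BQ * SQ" by blast
    have "Sinv' = Sinv" using Si Si' by simp
    then have TQ: "map_mat rat_of_int T = Sinv * BQ * SQ" using TQ by simp
    have "map_mat rat_of_int (S * T) = SQ * (Sinv * BQ * SQ)"
      unfolding SQ_def of_int_hom.mat_hom_mult[OF S T] TQ[unfolded SQ_def] ..
    also have "\<dots> = BQ * SQ"
    proof -
      have BS: "BQ * SQ \<in> carrier_mat d d" using BQ SQ by simp
      have "Sinv * BQ * SQ = Sinv * (BQ * SQ)" by (rule assoc_mult_mat[OF Si1(3) BQ SQ])
      then have "SQ * (Sinv * BQ * SQ) = SQ * (Sinv * (BQ * SQ))" by simp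
      also have "\<dots> = (SQ * Sinv) * (BQ * SQ)" by (rule assoc_mult_mat[OF SQ Si1(3) BS, symmetric])
      also have "\<dots> = BQ * SQ" using Si1(1) BS by (simp add: left_mult_one_mat)
      finally show ?thesis .
    qed
    also have "\<dots> = map_mat rat_of_int (B * S)"
      unfolding SQ_def BQ_def of_int_hom.mat_hom_mult[OF B S] ..
    finally have BST: "S * T = B * S" by (rule map_mat_inj) (use S T B in auto)
    show "\<forall>v\<in>L. B *\<^sub>v v \<in> L"
    proof
      fix v assume "v \<in> L"
      then obtain x where x: "x \<in> carrier_vec d" "v = S *\<^sub>v x" unfolding L by auto
      have "B *\<^sub>v v = (B * S) *\<^sub>v x" unfolding x(2) using B S x(1) by (simp add: assoc_mult_mat_vec)
      also have "\<dots> = S *\<^sub>v (T *\<^sub>v x)" unfolding BST[symmetric] using S T x(1) by (simp add: assoc_mult_mat_vec)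
      finally show "B *\<^sub>v v \<in> L" unfolding L using T x(1) by auto
    qed
  qed
qed



lemma vec_id1:
  fixes A :: "int mat"
  assumes A: "A \<in> carrier_mat d d" and x: "x \<in> carrier_vec d" and l: "l \<in> carrier_vec d" and y: "y \<in> carrier_vec d"
  shows "A *\<^sub>v (x + l) + y = (A *\<^sub>v x + y) + A *\<^sub>v l"
  unfolding mult_add_distrib_mat_vec[OF A x l]
  by (rule eq_vecI) (use A x l y in auto)

theorem corollary3p1p3:
  fixes n :: nat and \<alpha> :: complex and I :: "complex set" and L :: "int vec set" and S :: "int mat"
  assumes hn: "n \<in> pid_cyclotomic_indices"
    and h\<alpha>: "\<alpha> \<in> Mring n"
    and hI: "I = (\<lambda>m. \<alpha> * m) ` Mring n"
    and hL: "L = {v \<in> Lam n. emb n v \<in> I}"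
    and hfin: "finite (coset L ` Lam n)"
    and hS: "S \<in> carrier_mat (totient n) (totient n)"
    and hSL: "L = {S *\<^sub>v c | c. c \<in> Lam n}"
  shows "colorH n L = symG n \<longleftrightarrow>
    (\<exists>Sinv T. mat_inverse (map_mat rat_of_int S) = Some Sinv \<and>
       T \<in> carrier_mat (totient n) (totient n) \<and>
       map_mat rat_of_int T = Sinv * map_mat rat_of_int (phi2_mat n) * map_mat rat_of_int S)"
proof -
  have n: "n > 0" "n \<le> 84" using hn unfolding pid_cyclotomic_indices_def by auto
  define d where "d = totient n"
  define B where "B = phi2_mat n"
  define P where "P = phi1_mat n"
  have LamC: "Lam n = carrier_vec d" unfolding Lam_def d_def ..
  have S: "S \<in> carrier_mat d d" using hS unfolding d_def .
  have Bc: "B \<in> carrier_mat d d" unfolding B_def phi2_mat_def d_def by simp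
  have Pc: "P \<in> carrier_mat d d" unfolding P_def phi1_mat_def d_def by simp
  have hSL': "L = {S *\<^sub>v c | c. c \<in> carrier_vec d}" using hSL unfolding LamC .
  have LC: "L \<subseteq> carrier_vec d" using S unfolding hSL' by auto
  have L0: "0\<^sub>v d \<in> L" unfolding hSL' using S by (auto intro!: exI[of _ "0\<^sub>v d"])
  have Ldiff: "a - b \<in> L" if a: "a \<in> L" and b: "b \<in> L" for a b
  proof -
    obtain x where x: "x \<in> carrier_vec d" "a = S *\<^sub>v x" using a unfolding hSL' by auto
    obtain y where y: "y \<in> carrier_vec d" "b = S *\<^sub>v y" using b unfolding hSL' by auto
    have "a - b = S *\<^sub>v (x - y)" unfolding x(2) y(2) using mult_minus_distrib_mat_vec[OF S x(1) y(1)] by simp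
    then show ?thesis unfolding hSL' using x(1) y(1) by auto
  qed
  have LI: "v \<in> L \<longleftrightarrow> v \<in> Lam n \<and> (\<exists>m\<in>Mring n. emb n v = \<alpha> * m)" for v
    unfolding hL hI by auto
  have P1: "P *\<^sub>v v \<in> L" if v: "v \<in> L" for v
  proof -
    from v obtain m where vl: "v \<in> Lam n" and m: "m \<in> Mring n" "emb n v = \<alpha> * m" using LI by blast
    have "emb n (P *\<^sub>v v) = \<alpha> * (zetaN n * m)" unfolding P_def phi1_act(2)[OF n vl] m(2) by simp
    moreover have "zetaN n * m \<in> Mring n" by (rule Mring_mult[OF n Mring_zetaN[OF n] m(1)])
    moreover have "P *\<^sub>v v \<in> Lam n" unfolding P_def by (rule phi1_act(1)[OF n vl])
    ultimately show ?thesis using LI by blast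
  qed
  have P2: "\<exists>u\<in>L. v = P *\<^sub>v u" if v: "v \<in> L" for v
  proof -
    from v obtain m where vl: "v \<in> Lam n" and m: "m \<in> Mring n" "emb n v = \<alpha> * m" using LI by blast
    define z where "z = cnj (zetaN n) * emb n v"
    have zM: "z \<in> Mring n" unfolding z_def
      by (rule Mring_mult[OF n Mring_cnj[OF n Mring_zetaN[OF n]]]) (use vl in \<open>auto simp: Mring_def\<close>)
    define u where "u = coords n z"
    have ul: "u \<in> Lam n" and eu: "emb n u = z" unfolding u_def using coords[OF n zM] by auto
    have "emb n u = \<alpha> * (cnj (zetaN n) * m)" unfolding eu z_def m(2) by simp
    moreover have "cnj (zetaN n) * m \<in> Mring n" by (rule Mring_mult[OF n Mring_cnj[OF n Mring_zetaN[OF n]] m(1)])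
    ultimately have uL: "u \<in> L" using LI ul by blast
    have "emb n (P *\<^sub>v u) = emb n v"
      unfolding P_def phi1_act(2)[OF n ul] eu z_def mult.assoc[symmetric] zetaN_cnj by simp
    then have "P *\<^sub>v u = v" using inj_onD[OF emb_inj[OF n] _ phi1_act(1)[OF n ul] vl] unfolding P_def by simp
    with uL show ?thesis by auto
  qed
  have Binv: "B *\<^sub>v (B *\<^sub>v v) = v" if v: "v \<in> Lam n" for v
  proof -
    have Bv: "B *\<^sub>v v \<in> Lam n" unfolding B_def by (rule phi2_act(1)[OF n v])
    have "emb n (B *\<^sub>v (B *\<^sub>v v)) = emb n v"
      unfolding B_def phi2_act(2)[OF n Bv[unfolded B_def]] phi2_act(2)[OF n v] by simp
    then show ?thesis using inj_onD[OF emb_inj[OF n] _ phi2_act(1)[OF n Bv[unfolded B_def]] v] unfolding B_def by simp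
  qed
  have BLam: "B *\<^sub>v v \<in> Lam n" if "v \<in> Lam n" for v unfolding B_def by (rule phi2_act(1)[OF n that])
  have E1: "colorH n L = symG n \<longleftrightarrow> (\<forall>v\<in>L. B *\<^sub>v v \<in> L)"
  proof
    assume eq: "colorH n L = symG n"
    show "\<forall>v\<in>L. B *\<^sub>v v \<in> L"
    proof
      fix v assume vL: "v \<in> L"
      have vC: "v \<in> carrier_vec d" using vL LC by auto
      define g where "g = (\<lambda>x. (phi2_mat n * 1\<^sub>m (totient n)) *\<^sub>v x + 0\<^sub>v d)"
      have "phi2_mat n * 1\<^sub>m (totient n) \<in> DN n" by (intro DN.refl DN.one)
      moreover have "0\<^sub>v d \<in> Lam n" unfolding LamC by simp
      ultimately have "g \<in> symG n" unfolding g_def symG_def by blast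
      then have "g \<in> colorH n L" using eq by simp
      moreover have "0\<^sub>v d \<in> Lam n" unfolding LamC by simp
      ultimately obtain x' where x': "x' \<in> Lam n" "g ` coset L (0\<^sub>v d) = coset L x'"
        unfolding colorH_def by blast
      have gx: "g x = B *\<^sub>v x" if "x \<in> carrier_vec d" for x
        unfolding g_def B_def using that Bc[unfolded B_def] d_def by simp
      have "v \<in> coset L (0\<^sub>v d)" unfolding coset_def using vL vC by (auto intro!: exI[of _ v])
      then have "g v \<in> coset L x'" using x'(2) by blast
      then obtain l1 where l1: "l1 \<in> L" "g v = x' + l1" unfolding coset_def by auto
      have "0\<^sub>v d \<in> coset L (0\<^sub>v d)" unfolding coset_def using L0 by (auto intro!: exI[of _ "0\<^sub>v d"])
      then have "g (0\<^sub>v d) \<in> coset L x'" using x'(2) by blast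
      then obtain l0 where l0: "l0 \<in> L" "g (0\<^sub>v d) = x' + l0" unfolding coset_def by auto
      have g0: "g (0\<^sub>v d) = 0\<^sub>v d" using gx[of "0\<^sub>v d"] Bc by (auto intro!: eq_vecI simp: scalar_prod_def)
      have x'C: "x' \<in> carrier_vec d" using x'(1) LamC by simp
      have l0C: "l0 \<in> carrier_vec d" and l1C: "l1 \<in> carrier_vec d" using l0 l1 LC by auto
      have "B *\<^sub>v v = l1 - l0"
      proof (rule eq_vecI)
        fix i assume "i < dim_vec (l1 - l0)"
        then have i: "i < d" using l0C l1C by simp
        have "(B *\<^sub>v v) $ i = x' $ i + l1 $ i" using arg_cong[OF l1(2), of "\<lambda>w. w $ i"] gx[OF vC] i x'C l1C by simp
        moreover have "0 = x' $ i + l0 $ i" using arg_cong[OF l0(2), of "\<lambda>w. w $ i"] g0 i x'C l0C by simp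
        ultimately show "(B *\<^sub>v v) $ i = (l1 - l0) $ i" using i l0C l1C by simp
      qed (use Bc vC l0C l1C in simp)
      then show "B *\<^sub>v v \<in> L" using Ldiff[OF l1(1) l0(1)] by simp
    qed
  next
    assume H: "\<forall>v\<in>L. B *\<^sub>v v \<in> L"
    have DNinv: "A \<in> carrier_mat d d \<and> (\<forall>v\<in>L. A *\<^sub>v v \<in> L) \<and> (\<forall>v\<in>L. \<exists>u\<in>L. v = A *\<^sub>v u)"
      if "A \<in> DN n" for A
      using that
    proof (induction rule: DN.induct)
      case one
      have "1\<^sub>m (totient n) *\<^sub>v v = v" if "v \<in> L" for v using that LC unfolding d_def by auto
      then show ?case unfolding d_def by (metis one_carrier_mat)
    next
      case (rot A)
      then have A: "A \<in> carrier_mat d d" and A1: "\<forall>v\<in>L. A *\<^sub>v v \<in> L" and A2: "\<forall>v\<in>L. \<exists>u\<in>L. v = A *\<^sub>v u" by auto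
      have as: "(P * A) *\<^sub>v v = P *\<^sub>v (A *\<^sub>v v)" if "v \<in> L" for v
        using assoc_mult_mat_vec[OF Pc A] that LC by auto
      show ?case unfolding P_def[symmetric]
      proof (intro conjI ballI)
        show "P * A \<in> carrier_mat d d" using Pc A by simp
        fix v assume v: "v \<in> L"
        show "(P * A) *\<^sub>v v \<in> L" unfolding as[OF v] using P1 A1 v by blast
        obtain u1 where u1: "u1 \<in> L" "v = P *\<^sub>v u1" using P2[OF v] by blast
        obtain u2 where u2: "u2 \<in> L" "u1 = A *\<^sub>v u2" using A2 u1(1) by blast
        have "v = (P * A) *\<^sub>v u2" using u1(2) u2(2) as[OF u2(1)] by simp
        then show "\<exists>u\<in>L. v = (P * A) *\<^sub>v u" using u2(1) by blast
      qed
    next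
      case (refl A)
      then have A: "A \<in> carrier_mat d d" and A1: "\<forall>v\<in>L. A *\<^sub>v v \<in> L" and A2: "\<forall>v\<in>L. \<exists>u\<in>L. v = A *\<^sub>v u" by auto
      have as: "(B * A) *\<^sub>v v = B *\<^sub>v (A *\<^sub>v v)" if "v \<in> L" for v
        using assoc_mult_mat_vec[OF Bc A] that LC by auto
      show ?case unfolding B_def[symmetric]
      proof (intro conjI ballI)
        show "B * A \<in> carrier_mat d d" using Bc A by simp
        fix v assume v: "v \<in> L"
        show "(B * A) *\<^sub>v v \<in> L" unfolding as[OF v] using H A1 v by blast
        have vl: "v \<in> Lam n" using v LC LamC by auto
        have u1: "B *\<^sub>v v \<in> L" "v = B *\<^sub>v (B *\<^sub>v v)" using H v Binv[OF vl] by auto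
        obtain u2 where u2: "u2 \<in> L" "B *\<^sub>v v = A *\<^sub>v u2" using A2 u1(1) by blast
        have "v = (B * A) *\<^sub>v u2" using u1(2) u2(2) as[OF u2(1)] by simp
        then show "\<exists>u\<in>L. v = (B * A) *\<^sub>v u" using u2(1) by blast
      qed
    qed
    show "colorH n L = symG n"
    proof
      show "colorH n L \<subseteq> symG n" unfolding colorH_def by auto
      show "symG n \<subseteq> colorH n L"
      proof
        fix g assume "g \<in> symG n"
        then obtain A y where g: "g = (\<lambda>x. A *\<^sub>v x + y)" and A: "A \<in> DN n" and y: "y \<in> Lam n"
          unfolding symG_def by blast
        from DNinv[OF A] have Ac: "A \<in> carrier_mat d d" and A1: "\<forall>v\<in>L. A *\<^sub>v v \<in> L"
          and A2: "\<forall>v\<in>L. \<exists>u\<in>L. v = A *\<^sub>v u" by auto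
        have yC: "y \<in> carrier_vec d" using y LamC by simp
        have "\<forall>x\<in>Lam n. \<exists>x'\<in>Lam n. g ` coset L x = coset L x'"
        proof
          fix x assume x: "x \<in> Lam n"
          then have xC: "x \<in> carrier_vec d" using LamC by simp
          define x' where "x' = A *\<^sub>v x + y"
          have x'L: "x' \<in> Lam n" unfolding x'_def LamC using Ac xC yC by simp
          have "g ` coset L x = coset L x'"
          proof
            show "g ` coset L x \<subseteq> coset L x'"
            proof
              fix z assume "z \<in> g ` coset L x"
              then obtain l where l: "l \<in> L" "z = g (x + l)" unfolding coset_def by auto
              have lC: "l \<in> carrier_vec d" using l(1) LC by auto
              have "z = x' + A *\<^sub>v l" unfolding l(2) g x'_def by (rule vec_id1[OF Ac xC lC yC])
              then show "z \<in> coset L x'" unfolding coset_def using A1 l(1) by auto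
            qed
            show "coset L x' \<subseteq> g ` coset L x"
            proof
              fix z assume "z \<in> coset L x'"
              then obtain l' where l': "l' \<in> L" "z = x' + l'" unfolding coset_def by auto
              obtain u where u: "u \<in> L" "l' = A *\<^sub>v u" using A2 l'(1) by blast
              have uC: "u \<in> carrier_vec d" using u(1) LC by auto
              have "z = g (x + u)" unfolding l'(2) u(2) g x'_def by (rule vec_id1[OF Ac xC uC yC, symmetric])
              moreover have "x + u \<in> coset L x" unfolding coset_def using u(1) by auto
              ultimately show "z \<in> g ` coset L x" by blast
            qed
          qed
          with x'L show "\<exists>x'\<in>Lam n. g ` coset L x = coset L x'" by blast
        qed
        then show "g \<in> colorH n L" unfolding colorH_def using \<open>g \<in> symG n\<close> by blast
      qed
    qed
  qed
  have dS: "det S \<noteq> 0" by (rule det_nonzero[OF S hSL']) (use hfin LamC in simp)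
  show ?thesis unfolding E1 using mat_condition[OF S Bc dS hSL'] unfolding B_def d_def by simp
qed


end
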